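(* Assume (G1) and (G2). Then for every $\eta>0$, $$\frac{d}{dt}\int_\Omega\frac{1}{\gamma(\Theta)+D}v_x^2+\frac{2\gamma(0)}{\gamma(0)+D}\int_\Omega v_{xx}^2\le(2+\eta)a\int_\Omega\frac1{\gamma(\Theta)+D}v_x^2+\frac{a^3}{\eta D}\int_\Omega u_x^2\quad\text{for all }t\in(0,T_{max}).$$
   Context: Standing setting: $\Omega\subset\mathbb{R}$ is an open bounded interval, $a>0$, $D>0$. (G1): $\gamma\in C^2([0,\infty))$ with $\gamma>0$ and $\gamma'\ge0$ on $[0,\infty)$. (G2): $D(\gamma+D)\gamma''+2\gamma\gamma'^2\le0$ on $[0,\infty)$. Initial data: $u_0\in W^{3,2}(\Omega)$, $u_{0x}=0$ on $\partial\Omega$; $u_{0t}\in W^{2,2}(\Omega)$, $(u_{0t})_x=0$ on $\partial\Omega$; $\Theta_0\in W^{2,2}(\Omega)$, $\Theta_0\ge0$, $\Theta_{0x}=0$ on $\partial\Omega$. Under (G1), there are $T_{max}\in(0,\infty]$ and a unique classical solution $(u,\Theta)$, $\Theta\ge0$, of $u_{tt}=(\gamma(\Theta)u_{xt})_x+a(\gamma(\Theta)u_x)_x$, $\Theta_t=D\Theta_{xx}+\gamma(\Theta)u_{xt}^2$ in $\Omega\times(0,T_{max})$, $u_x=\Theta_x=0$ on $\partial\Omega$, $u(\cdot,0)=u_0$, $u_t(\cdot,0)=u_{0t}$, $\Theta(\cdot,0)=\Theta_0$, with $u,u_t,\Theta\in\bigcup_{\mu\in(0,1)}C^{1+\mu,\frac{1+\mu}2}(\overline\Omega\times[0,T_{max}))\cap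 C^{2,1}(\overline\Omega\times(0,T_{max}))$, and such that if $T_{max}<\infty$ then $\limsup_{t\nearrow T_{max}}(\|u_t(\cdot,t)\|_{W^{1,2}(\Omega)}+\|\Theta(\cdot,t)\|_{L^\infty(\Omega)})=\infty$. Set $v:=u_t+au$; then $v_t=(\gamma(\Theta)v_x)_x+av-a^2u$, $u_t=v-au$, and $v_x=0$ on $\partial\Omega$. *)

theory Defs
  imports "HOL-Analysis.Analysis"
begin

text \<open>f belongs to C^{2,1}([al,be] x I): f, f_x, f_xx, f_t exist and are continuous
  on [al,be] x I; fx, fxx, ft are the respective partial derivatives
  (one-sided in x at the endpoints of [al,be]).\<close>
definition C21 :: "real \<Rightarrow> real \<Rightarrow> real set \<Rightarrow> (real \<Rightarrow> real \<Rightarrow> real) \<Rightarrow>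
    (real \<Rightarrow> real \<Rightarrow> real) \<Rightarrow> (real \<Rightarrow> real \<Rightarrow> real) \<Rightarrow> (real \<Rightarrow> real \<Rightarrow> real) \<Rightarrow> bool" where
  "C21 al be I f fx fxx ft \<longleftrightarrow>
     continuous_on ({al..be} \<times> I) (\<lambda>p. f (fst p) (snd p)) \<and>
     continuous_on ({al..be} \<times> I) (\<lambda>p. fx (fst p) (snd p)) \<and>
     continuous_on ({al..be} \<times> I) (\<lambda>p. fxx (fst p) (snd p)) \<and>
     continuous_on ({al..be} \<times> I) (\<lambda>p. ft (fst p) (snd p)) \<and>
     (\<forall>x\<in>{al..be}. \<forall>t\<in>I.
        ((\<lambda>y. f y t) has_real_derivative fx x t) (at x within {al..be}) \<and>
        ((\<lambda>y. fx y t) has_real_derivative fxx x t) (at x within {al..be}) \<and>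
        ((\<lambda>s. f x s) has_real_derivative ft x t) (at t))"

end

theory Submission
  imports Defs
begin


lemma key_identity:
  fixes w z g g1 g2 r q p a D ut1 :: real
  assumes gD: "g + D > 0"
  shows "2*w*z/(g+D) - w^2*(g1*(D*r + g*ut1^2))/(g+D)^2
    - ((z - a*ut1)*(2*w/(g+D)) + (g1*q*w + g*p)*(2*p/(g+D) - 2*w*(g1*q)/(g+D)^2))
    + D*(r*(w^2*g1/(g+D)^2) + q*(2*w*p*g1/(g+D)^2 + w^2*(g2*q)/(g+D)^2 - 2*w^2*g1*(g1*q)/(g+D)^3))
   = 2*a*ut1*w/(g+D) - 2*g*p^2/(g+D) + q^2*w^2*(2*g*g1^2 + D*(g+D)*g2)/(g+D)^3 - w^2*g1*g*ut1^2/(g+D)^2"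
proof -
  obtain k where k: "k = g + D" by blast
  then have g: "g = k - D" by simp
  have ne: "k \<noteq> 0" using gD k by simp
  show ?thesis unfolding g using ne by (simp add: field_simps power2_eq_square power3_eq_cube)
qed

lemma key_ineq:
  fixes w g g1 g2 q p a D ux g0 \<eta> :: real
  assumes g0: "0 < g0" "g0 \<le> g" and D: "0 < D" and a: "0 < a" and eta: "0 < \<eta>"
    and g1: "0 \<le> g1" and G2: "D * (g + D) * g2 + 2 * g * g1\<^sup>2 \<le> 0"
  shows "2*a*(w - a*ux)*w/(g+D) - 2*g*p^2/(g+D) + q^2*w^2*(2*g*g1^2 + D*(g+D)*g2)/(g+D)^3 - w^2*g1*g*(w - a*ux)^2/(g+D)^2
    \<le> (2+\<eta>)*a*(w^2/(g+D)) + a^3/(\<eta>*D)*ux^2 - 2*g0/(g0+D)*p^2"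
proof -
  have gD: "g + D > 0" using g0 D by simp
  have t3: "q^2*w^2*(2*g*g1^2 + D*(g+D)*g2)/(g+D)^3 \<le> 0"
    using G2 gD by (intro divide_nonpos_pos mult_nonneg_nonpos) (auto simp: algebra_simps)
  have t4: "w^2*g1*g*(w - a*ux)^2/(g+D)^2 \<ge> 0" using g1 g0 gD by simp
  have t2: "2*g*p^2/(g+D) \<ge> 2*g0/(g0+D)*p^2"
  proof -
    have "g0/(g0+D) \<le> g/(g+D)" using g0 D by (simp add: field_simps)
    then have "2*g0/(g0+D)*p^2 \<le> 2*(g/(g+D))*p^2" by (intro mult_right_mono) auto
    then show ?thesis by simp
  qed
  have young: "- 2*a^2*ux*w/(g+D) \<le> \<eta>*a*(w^2/(g+D)) + a^3/(\<eta>*(g+D))*ux^2"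
  proof -
    have "0 \<le> (\<eta>*w + a*ux)^2" by simp
    then have "- 2*\<eta>*a*ux*w \<le> \<eta>^2*w^2 + a^2*ux^2" by (simp add: power2_eq_square algebra_simps)
    then have "(- 2*\<eta>*a*ux*w) * (a/(\<eta>*(g+D))) \<le> (\<eta>^2*w^2 + a^2*ux^2) * (a/(\<eta>*(g+D)))"
      using a eta gD by (intro mult_right_mono) auto
    moreover have "(- 2*\<eta>*a*ux*w) * (a/(\<eta>*(g+D))) = - 2*a^2*ux*w/(g+D)"
      using eta by (simp add: power2_eq_square)
    moreover have "(\<eta>^2*w^2 + a^2*ux^2) * (a/(\<eta>*(g+D))) = \<eta>*a*(w^2/(g+D)) + a^3/(\<eta>*(g+D))*ux^2"
      proof -
      obtain k where k: "k = g + D" "k > 0" using gD by blast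
      have "(\<eta>^2*w^2 + a^2*ux^2) * (a/(\<eta>*k)) = (\<eta>^2*w^2)*(a/(\<eta>*k)) + (a^2*ux^2) * (a/(\<eta>*k))"
        by (simp add: distrib_right add_divide_distrib)
      moreover have "(\<eta>^2*w^2)*(a/(\<eta>*k)) = \<eta>*a*(w^2/k)" using eta k(2) by (simp add: field_simps power2_eq_square)
      moreover have "(a^2*ux^2) * (a/(\<eta>*k)) = a^3/(\<eta>*k)*ux^2" using eta k(2) by (simp add: field_simps power2_eq_square power3_eq_cube)
      ultimately show ?thesis using k by simp
    qed
    ultimately show ?thesis by simp
  qed
  have y2: "a^3/(\<eta>*(g+D))*ux^2 \<le> a^3/(\<eta>*D)*ux^2"
    using g0 D eta a by (intro mult_right_mono divide_left_mono mult_left_mono) auto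
  have e1: "2*a*(w - a*ux)*w/(g+D) = 2*a*(w^2/(g+D)) - 2*a^2*ux*w/(g+D)"
    by (simp add: diff_divide_distrib[symmetric] power2_eq_square algebra_simps)
  have e2: "(2+\<eta>)*a*(w^2/(g+D)) = 2*a*(w^2/(g+D)) + \<eta>*a*(w^2/(g+D))" by (simp only: distrib_right)
  show ?thesis using t2 t3 t4 young y2 e1 e2 by linarith
qed


lemma chain_nonneg:
  fixes \<gamma> \<gamma>' f :: "real \<Rightarrow> real"
  assumes "(\<gamma> has_real_derivative \<gamma>' (f x)) (at (f x) within {0..})"
    "(f has_real_derivative f') (at x within S)" "\<And>y. y \<in> S \<Longrightarrow> 0 \<le> f y"
  shows "((\<lambda>y. \<gamma> (f y)) has_real_derivative \<gamma>' (f x) * f') (at x within S)"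
proof -
  have "(\<gamma> has_real_derivative \<gamma>' (f x)) (at (f x) within f ` S)"
    by (rule has_field_derivative_subset[OF assms(1)]) (use assms(3) in auto)
  from DERIV_image_chain[OF this assms(2)] show ?thesis by (simp add: o_def)
qed

lemma ftc_zero:
  fixes f f' :: "real \<Rightarrow> real"
  assumes "al \<le> be" "\<And>x. x \<in> {al..be} \<Longrightarrow> (f has_real_derivative f' x) (at x within {al..be})"
    "f al = 0" "f be = 0"
  shows "(f' has_integral 0) {al..be}"
proof -
  have "(f' has_integral (f be - f al)) {al..be}"
    by (rule fundamental_theorem_of_calculus) (use assms in \<open>auto simp: has_real_derivative_iff_has_vector_derivative[symmetric]\<close>)
  then show ?thesis using assms by simp
qed

lemma cont_slice:
  fixes f :: "real \<Rightarrow> real \<Rightarrow> real"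
  assumes "continuous_on (A \<times> B) (\<lambda>p. f (fst p) (snd p))" "t \<in> B"
  shows "continuous_on A (\<lambda>x. f x t)"
proof -
  have "continuous_on A (\<lambda>x. (\<lambda>p. f (fst p) (snd p)) (x, t))"
    by (rule continuous_on_compose2[OF assms(1)]) (use assms(2) in \<open>auto intro!: continuous_intros\<close>)
  then show ?thesis by simp
qed

lemma cont_swap:
  fixes f :: "real \<Rightarrow> real \<Rightarrow> real"
  assumes "continuous_on (A \<times> B) (\<lambda>p. f (fst p) (snd p))"
  shows "continuous_on (B \<times> A) (\<lambda>p. f (snd p) (fst p))"
proof -
  have "continuous_on (B \<times> A) (\<lambda>p. (\<lambda>p. f (fst p) (snd p)) (snd p, fst p))"
    by (rule continuous_on_compose2[OF assms(1)]) (auto intro!: continuous_intros)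
  then show ?thesis by simp
qed

lemma quot_alg:
  fixes K Z W E :: real
  assumes "K \<noteq> 0"
  shows "(2 * (Z * W) * K - W^2 * E) / (K * K) = 2 * W * Z / K - W^2 * E / K^2"
  using assms by (simp add: field_simps power2_eq_square)

lemma quot_alg2:
  fixes K P E U :: real
  assumes "K \<noteq> 0"
  shows "(P * K - E) * U / (K * K) = U * (P / K - E / K^2)"
  using assms by (simp add: field_simps power2_eq_square)

lemma quot_alg3:
  fixes K P W A B Q :: real
  assumes "K \<noteq> 0"
  shows "((2 * (P * W) * A + B * Q * W\<^sup>2) * K\<^sup>2 - W\<^sup>2 * A * (2 * (A * Q * K))) * Q / K ^ 4
    = Q * (2 * W * P * A / K\<^sup>2 + W\<^sup>2 * (B * Q) / K\<^sup>2 - 2 * W\<^sup>2 * A * (A * Q) / K ^ 3)"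
  using assms by (simp add: field_simps power2_eq_square power3_eq_cube power4_eq_xxxx)



theorem lemma2p2:
  fixes al be a D :: real
    and \<gamma> \<gamma>' \<gamma>'' :: "real \<Rightarrow> real"
    and Tmax :: ereal
    and u ux uxx ut utx utxx utt \<Theta> \<Theta>x \<Theta>xx \<Theta>t vxt :: "real \<Rightarrow> real \<Rightarrow> real"
  defines "I \<equiv> {t::real. 0 < t \<and> ereal t < Tmax}"
  assumes interval: "al < be"
    and a_pos: "0 < a" and D_pos: "0 < D"
    and Tmax_pos: "0 < Tmax"
    \<comment> \<open>(G1): gamma in C^2([0,oo)), gamma > 0, gamma' >= 0\<close>
    and g1_d1: "\<And>s. 0 \<le> s \<Longrightarrow> (\<gamma> has_real_derivative \<gamma>' s) (at s within {0..})"
    and g1_d2: "\<And>s. 0 \<le> s \<Longrightarrow> (\<gamma>' has_real_derivative \<gamma>'' s) (at s within {0..})"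
    and g1_c2: "continuous_on {0..} \<gamma>''"
    and g1_pos: "\<And>s. 0 \<le> s \<Longrightarrow> 0 < \<gamma> s"
    and g1_mono: "\<And>s. 0 \<le> s \<Longrightarrow> 0 \<le> \<gamma>' s"
    \<comment> \<open>(G2)\<close>
    and g2: "\<And>s. 0 \<le> s \<Longrightarrow> D * (\<gamma> s + D) * \<gamma>'' s + 2 * \<gamma> s * (\<gamma>' s)\<^sup>2 \<le> 0"
    \<comment> \<open>regularity: u, u_t, Theta in C^{2,1}(closure Omega x (0,Tmax))\<close>
    and reg_u: "C21 al be I u ux uxx ut"
    and reg_ut: "C21 al be I ut utx utxx utt"
    and reg_Theta: "C21 al be I \<Theta> \<Theta>x \<Theta>xx \<Theta>t"
    \<comment> \<open>mixed derivative v_xt = (v_x)_t = (v_t)_x of v = u_t + a u exists and is continuous\<close>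
    and reg_vxt_t: "\<And>x t. x \<in> {al..be} \<Longrightarrow> t \<in> I \<Longrightarrow>
        ((\<lambda>s. utx x s + a * ux x s) has_real_derivative vxt x t) (at t)"
    and reg_vxt_x: "\<And>x t. x \<in> {al..be} \<Longrightarrow> t \<in> I \<Longrightarrow>
        ((\<lambda>y. utt y t + a * ut y t) has_real_derivative vxt x t) (at x within {al..be})"
    and reg_vxt_c: "continuous_on ({al..be} \<times> I) (\<lambda>p. vxt (fst p) (snd p))"
    \<comment> \<open>Theta >= 0\<close>
    and Theta_nonneg: "\<And>x t. x \<in> {al..be} \<Longrightarrow> t \<in> I \<Longrightarrow> 0 \<le> \<Theta> x t"
    \<comment> \<open>the PDE system in Omega x (0,Tmax)\<close>
    and eq_u: "\<And>x t. x \<in> {al<..<be} \<Longrightarrow> t \<in> I \<Longrightarrow>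
        utt x t = deriv (\<lambda>y. \<gamma> (\<Theta> y t) * utx y t) x
                  + a * deriv (\<lambda>y. \<gamma> (\<Theta> y t) * ux y t) x"
    and eq_Theta: "\<And>x t. x \<in> {al<..<be} \<Longrightarrow> t \<in> I \<Longrightarrow>
        \<Theta>t x t = D * \<Theta>xx x t + \<gamma> (\<Theta> x t) * (utx x t)\<^sup>2"
    \<comment> \<open>Neumann boundary conditions (u_x = Theta_x = 0, hence v_x = 0, on the boundary)\<close>
    and bc_u: "\<And>t. t \<in> I \<Longrightarrow> ux al t = 0 \<and> ux be t = 0"
    and bc_ut: "\<And>t. t \<in> I \<Longrightarrow> utx al t = 0 \<and> utx be t = 0"
    and bc_Theta: "\<And>t. t \<in> I \<Longrightarrow> \<Theta>x al t = 0 \<and> \<Theta>x be t = 0"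
  shows "\<forall>\<eta>>0. \<forall>t\<in>I.
     (\<lambda>s. integral {al..be} (\<lambda>x. (utx x s + a * ux x s)\<^sup>2 / (\<gamma> (\<Theta> x s) + D)))
        differentiable (at t) \<and>
     deriv (\<lambda>s. integral {al..be} (\<lambda>x. (utx x s + a * ux x s)\<^sup>2 / (\<gamma> (\<Theta> x s) + D))) t
       + 2 * \<gamma> 0 / (\<gamma> 0 + D) * integral {al..be} (\<lambda>x. (utxx x t + a * uxx x t)\<^sup>2)
     \<le> (2 + \<eta>) * a * integral {al..be} (\<lambda>x. (utx x t + a * ux x t)\<^sup>2 / (\<gamma> (\<Theta> x t) + D))
       + a ^ 3 / (\<eta> * D) * integral {al..be} (\<lambda>x. (ux x t)\<^sup>2)"
proof (intro allI impI ballI)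
  fix \<eta> t :: real
  assume eta: "0 < \<eta>" and tI: "t \<in> I"
  have I_oc: "open I \<and> convex I"
  proof (cases Tmax)
    case (real T)
    then have "I = {0<..<T}" unfolding I_def by auto
    then show ?thesis by simp
  next
    case PInf
    then have "I = {0<..}" unfolding I_def by auto
    then show ?thesis by simp
  next
    case MInf
    then show ?thesis using Tmax_pos by simp
  qed
  have I_open: "open I" and I_convex: "convex I" using I_oc by auto
  note C21_def[simp]
  have cu: "continuous_on ({al..be} \<times> I) (\<lambda>p. ux (fst p) (snd p))"
       "continuous_on ({al..be} \<times> I) (\<lambda>p. uxx (fst p) (snd p))"
       "continuous_on ({al..be} \<times> I) (\<lambda>p. ut (fst p) (snd p))"
       "continuous_on ({al..be} \<times> I) (\<lambda>p. utx (fst p) (snd p))"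
       "continuous_on ({al..be} \<times> I) (\<lambda>p. utxx (fst p) (snd p))"
       "continuous_on ({al..be} \<times> I) (\<lambda>p. utt (fst p) (snd p))"
       "continuous_on ({al..be} \<times> I) (\<lambda>p. \<Theta> (fst p) (snd p))"
       "continuous_on ({al..be} \<times> I) (\<lambda>p. \<Theta>x (fst p) (snd p))"
       "continuous_on ({al..be} \<times> I) (\<lambda>p. \<Theta>xx (fst p) (snd p))"
       "continuous_on ({al..be} \<times> I) (\<lambda>p. \<Theta>t (fst p) (snd p))"
    using reg_u reg_ut reg_Theta by auto
  have dux: "\<And>x s. x \<in> {al..be} \<Longrightarrow> s \<in> I \<Longrightarrow> ((\<lambda>y. ux y s) has_real_derivative uxx x s) (at x within {al..be})"
    using reg_u by auto
  have dut: "\<And>x s. x \<in> {al..be} \<Longrightarrow> s \<in> I \<Longrightarrow> ((\<lambda>y. ut y s) has_real_derivative utx x s) (at x within {al..be})"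
    using reg_ut by auto
  have dutx: "\<And>x s. x \<in> {al..be} \<Longrightarrow> s \<in> I \<Longrightarrow> ((\<lambda>y. utx y s) has_real_derivative utxx x s) (at x within {al..be})"
    using reg_ut by auto
  have dTh: "\<And>x s. x \<in> {al..be} \<Longrightarrow> s \<in> I \<Longrightarrow> ((\<lambda>y. \<Theta> y s) has_real_derivative \<Theta>x x s) (at x within {al..be})"
    using reg_Theta by auto
  have dThx: "\<And>x s. x \<in> {al..be} \<Longrightarrow> s \<in> I \<Longrightarrow> ((\<lambda>y. \<Theta>x y s) has_real_derivative \<Theta>xx x s) (at x within {al..be})"
    using reg_Theta by auto
  have dTht: "\<And>x s. x \<in> {al..be} \<Longrightarrow> s \<in> I \<Longrightarrow> ((\<lambda>s. \<Theta> x s) has_real_derivative \<Theta>t x s) (at s)"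
    using reg_Theta by auto
  have g_cont: "continuous_on {0..} \<gamma>" by (rule DERIV_continuous_on[OF g1_d1]) simp
  have g'_cont: "continuous_on {0..} \<gamma>'" by (rule DERIV_continuous_on[OF g1_d2]) simp
  have g_mono: "\<gamma> 0 \<le> \<gamma> s" if "0 \<le> s" for s
  proof (rule DERIV_nonneg_imp_increasing_open[OF that])
    fix y :: real assume "0 < y" "y < s"
    then have "(\<gamma> has_real_derivative \<gamma>' y) (at y)"
      using g1_d1[of y] at_within_interior[of y "{0..}"] by simp
    then show "\<exists>y'. (\<gamma> has_real_derivative y') (at y) \<and> 0 \<le> y'" using g1_mono \<open>0 < y\<close> by auto
  next
    show "continuous_on {0..s} \<gamma>" using g_cont by (rule continuous_on_subset) auto
  qed
  have Th_nn: "\<And>x s. x \<in> {al..be} \<Longrightarrow> s \<in> I \<Longrightarrow> 0 \<le> \<Theta> x s" by (rule Theta_nonneg)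
  have gpos: "\<And>x s. x \<in> {al..be} \<Longrightarrow> s \<in> I \<Longrightarrow> 0 < \<gamma> (\<Theta> x s) + D"
    using g1_pos Th_nn D_pos by (meson add_pos_pos)
  define Fd where "Fd = (\<lambda>s x. 2*(utx x s + a*ux x s)* vxt x s/(\<gamma> (\<Theta> x s)+D)
      - (utx x s + a*ux x s)^2*(\<gamma>' (\<Theta> x s)*\<Theta>t x s)/(\<gamma> (\<Theta> x s)+D)^2)"
  have dF: "((\<lambda>s. (utx x s + a * ux x s)\<^sup>2 / (\<gamma> (\<Theta> x s) + D)) has_real_derivative Fd s x) (at s within I)"
    if x: "x \<in> {al..be}" and s: "s \<in> I" for x s
  proof -
    have dw: "((\<lambda>s. utx x s + a*ux x s) has_real_derivative vxt x s) (at s within I)"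
      using reg_vxt_t[OF x s] by (rule has_field_derivative_at_within)
    have dG: "((\<lambda>s. \<gamma> (\<Theta> x s)) has_real_derivative \<gamma>' (\<Theta> x s) * \<Theta>t x s) (at s within I)"
      by (rule chain_nonneg[where f="\<lambda>s. \<Theta> x s" and S=I and x=s and \<gamma>=\<gamma> and \<gamma>'=\<gamma>', OF g1_d1[OF Th_nn[OF x s]] has_field_derivative_at_within[OF dTht[OF x s]]])
        (use Th_nn x in auto)
    have ne: "\<gamma> (\<Theta> x s) + D \<noteq> 0" using gpos[OF x s] by simp
    show ?thesis
      apply (rule DERIV_cong[OF DERIV_divide[OF DERIV_power[OF dw, of 2] DERIV_add[OF dG DERIV_const] ne]])
      using quot_alg[OF ne, of "vxt x s" "utx x s + a * ux x s" "\<gamma>' (\<Theta> x s) * \<Theta>t x s"]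
      unfolding Fd_def by (simp add: mult_ac)
  qed
  have cG: "continuous_on ({al..be} \<times> I) (\<lambda>p. \<gamma> (\<Theta> (fst p) (snd p)))"
    by (rule continuous_on_compose2[OF g_cont cu(7)]) (use Th_nn in auto)
  have cG': "continuous_on ({al..be} \<times> I) (\<lambda>p. \<gamma>' (\<Theta> (fst p) (snd p)))"
    by (rule continuous_on_compose2[OF g'_cont cu(7)]) (use Th_nn in auto)
  have cFd0: "continuous_on ({al..be} \<times> I) (\<lambda>p. Fd (snd p) (fst p))"
    unfolding Fd_def
    using gpos by (intro continuous_intros cu cG cG' reg_vxt_c) (force simp: mem_Times_iff)+
  have cFd: "continuous_on (I \<times> cbox al be) (\<lambda>(s, x). Fd s x)"
    using cont_swap[OF cFd0] by (simp add: split_beta cbox_interval)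
  have intF: "(\<lambda>x. (utx x s + a * ux x s)\<^sup>2 / (\<gamma> (\<Theta> x s) + D)) integrable_on cbox al be" if s: "s \<in> I" for s
  proof -
    have "continuous_on {al..be} (\<lambda>x. (utx x s + a * ux x s)\<^sup>2 / (\<gamma> (\<Theta> x s) + D))"
      using gpos[OF _ s]
      by (intro continuous_intros cont_slice[OF cu(4) s] cont_slice[OF cu(1) s] cont_slice[OF cG s]) force
    then show ?thesis by (simp add: cbox_interval integrable_continuous_interval)
  qed
  have LB: "((\<lambda>s. integral (cbox al be) (\<lambda>x. (utx x s + a * ux x s)\<^sup>2 / (\<gamma> (\<Theta> x s) + D)))
      has_real_derivative integral (cbox al be) (Fd t)) (at t within I)"
    by (rule leibniz_rule_field_derivative[OF dF intF cFd tI I_convex])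
      (auto simp: cbox_interval)
  have LB2: "((\<lambda>s. integral {al..be} (\<lambda>x. (utx x s + a * ux x s)\<^sup>2 / (\<gamma> (\<Theta> x s) + D)))
      has_real_derivative integral {al..be} (Fd t)) (at t)"
    using LB at_within_open[OF tI I_open] by (simp add: cbox_interval)
  define w where "w = (\<lambda>x. utx x t + a * ux x t)"
  define p where "p = (\<lambda>x. utxx x t + a * uxx x t)"
  define G where "G = (\<lambda>x. \<gamma> (\<Theta> x t))"
  define G1 where "G1 = (\<lambda>x. \<gamma>' (\<Theta> x t))"
  define G2 where "G2 = (\<lambda>x. \<gamma>'' (\<Theta> x t))"
  define q where "q = (\<lambda>x. \<Theta>x x t)"
  define r where "r = (\<lambda>x. \<Theta>xx x t)"
  define h1 where "h1 = (\<lambda>x. (vxt x t - a * utx x t) * (2 * w x / (G x + D))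
     + utt x t * (2 * p x / (G x + D) - 2 * w x * (G1 x * q x) / (G x + D)^2))"
  define h2 where "h2 = (\<lambda>x. r x * (w x^2 * G1 x / (G x + D)^2) + q x * (2 * w x * p x * G1 x / (G x + D)^2
     + w x^2 * (G2 x * q x) / (G x + D)^2 - 2 * w x^2 * G1 x * (G1 x * q x) / (G x + D)^3))"
  have Gpos: "\<And>x. x \<in> {al..be} \<Longrightarrow> 0 < G x + D" unfolding G_def using gpos tI by blast
  have dw: "(w has_real_derivative p x) (at x within {al..be})" if x: "x \<in> {al..be}" for x
    unfolding w_def p_def by (rule DERIV_add[OF dutx[OF x tI] DERIV_cmult[OF dux[OF x tI]]])
  have dG: "(G has_real_derivative G1 x * q x) (at x within {al..be})" if x: "x \<in> {al..be}" for x
    unfolding G_def G1_def q_def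
    by (rule chain_nonneg[where f="\<lambda>y. \<Theta> y t" and S="{al..be}" and x=x and \<gamma>=\<gamma> and \<gamma>'=\<gamma>',
          OF g1_d1[OF Th_nn[OF x tI]] dTh[OF x tI]]) (use Th_nn tI in auto)
  have dG1: "(G1 has_real_derivative G2 x * q x) (at x within {al..be})" if x: "x \<in> {al..be}" for x
    unfolding G1_def G2_def q_def
    by (rule chain_nonneg[where f="\<lambda>y. \<Theta> y t" and S="{al..be}" and x=x and \<gamma>=\<gamma>' and \<gamma>'=\<gamma>'',
          OF g1_d2[OF Th_nn[OF x tI]] dTh[OF x tI]]) (use Th_nn tI in auto)
  have dq: "(q has_real_derivative r x) (at x within {al..be})" if x: "x \<in> {al..be}" for x
    unfolding q_def r_def by (rule dThx[OF x tI])
  have dutt: "((\<lambda>y. utt y t) has_real_derivative vxt x t - a * utx x t) (at x within {al..be})"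
    if x: "x \<in> {al..be}" for x
    using DERIV_diff[OF reg_vxt_x[OF x tI] DERIV_cmult[OF dut[OF x tI], of a]] by simp
  have ftc1: "(h1 has_integral 0) {al..be}"
  proof (rule ftc_zero[where f="\<lambda>y. utt y t * (2 * w y / (G y + D))"])
    fix x assume x: "x \<in> {al..be}"
    have ne: "G x + D \<noteq> 0" using Gpos[OF x] by simp
    show "((\<lambda>y. utt y t * (2 * w y / (G y + D))) has_real_derivative h1 x) (at x within {al..be})"
      apply (rule DERIV_cong[OF DERIV_mult[OF dutt[OF x] DERIV_divide[OF DERIV_cmult[OF dw[OF x]] DERIV_add[OF dG[OF x] DERIV_const] ne]]])
      unfolding h1_def using quot_alg2[OF ne] by simp
  qed (use interval bc_u[OF tI] bc_ut[OF tI] in \<open>auto simp: w_def\<close>)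
  have ftc2: "(h2 has_integral 0) {al..be}"
  proof (rule ftc_zero[where f="\<lambda>y. q y * (w y^2 * G1 y / (G y + D)^2)"])
    fix x assume x: "x \<in> {al..be}"
    have ne: "(G x + D)^2 \<noteq> 0" using Gpos[OF x] by simp
    show "((\<lambda>y. q y * (w y^2 * G1 y / (G y + D)^2)) has_real_derivative h2 x) (at x within {al..be})"
      apply (rule DERIV_cong[OF DERIV_mult[OF dq[OF x] DERIV_divide[OF DERIV_mult[OF DERIV_power[OF dw[OF x]] dG1[OF x]] DERIV_power[OF DERIV_add[OF dG[OF x] DERIV_const]] ne]]])
      unfolding h2_def using quot_alg3[of "G x + D"] Gpos[OF x] by simp
  qed (use interval bc_Theta[OF tI] in \<open>auto simp: q_def\<close>)
  have cw: "continuous_on {al..be} w" unfolding w_def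
    by (intro continuous_intros cont_slice[OF cu(4) tI] cont_slice[OF cu(1) tI])
  have cp: "continuous_on {al..be} p" unfolding p_def
    by (intro continuous_intros cont_slice[OF cu(5) tI] cont_slice[OF cu(2) tI])
  have cGx: "continuous_on {al..be} G" unfolding G_def by (rule cont_slice[OF cG tI])
  have cux: "continuous_on {al..be} (\<lambda>x. ux x t)" by (rule cont_slice[OF cu(1) tI])
  have i1: "((\<lambda>x. w x^2 / (G x + D)) has_integral integral {al..be} (\<lambda>x. w x^2 / (G x + D))) {al..be}"
    using Gpos by (intro integrable_integral integrable_continuous_interval continuous_intros cw cGx) force
  have i2: "((\<lambda>x. (ux x t)\<^sup>2) has_integral integral {al..be} (\<lambda>x. (ux x t)\<^sup>2)) {al..be}"
    by (intro integrable_integral integrable_continuous_interval continuous_intros cux)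
  have i3: "((\<lambda>x. (p x)\<^sup>2) has_integral integral {al..be} (\<lambda>x. (p x)\<^sup>2)) {al..be}"
    by (intro integrable_integral integrable_continuous_interval continuous_intros cp)
  have iFd: "(Fd t has_integral integral {al..be} (Fd t)) {al..be}"
    using cont_slice[OF cFd0 tI] by (intro integrable_integral integrable_continuous_interval) simp
  define \<Phi> where "\<Phi> = (\<lambda>x. Fd t x - h1 x + D * h2 x)"
  define R where "R = (\<lambda>x. (2 + \<eta>) * a * (w x^2 / (G x + D)) + a ^ 3 / (\<eta> * D) * (ux x t)\<^sup>2
     - 2 * \<gamma> 0 / (\<gamma> 0 + D) * (p x)\<^sup>2)"
  have hPhi: "(\<Phi> has_integral (integral {al..be} (Fd t) - 0 + D * 0)) {al..be}"
    unfolding \<Phi>_def by (intro has_integral_add has_integral_diff has_integral_mult_right iFd ftc1 ftc2)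
  have hR: "(R has_integral ((2 + \<eta>) * a * integral {al..be} (\<lambda>x. w x^2 / (G x + D))
      + a ^ 3 / (\<eta> * D) * integral {al..be} (\<lambda>x. (ux x t)\<^sup>2)
      - 2 * \<gamma> 0 / (\<gamma> 0 + D) * integral {al..be} (\<lambda>x. (p x)\<^sup>2))) {al..be}"
    unfolding R_def by (intro has_integral_add has_integral_diff has_integral_mult_right i1 i2 i3)
  have pw: "\<Phi> x \<le> R x" if x: "x \<in> {al<..<be}" for x
  proof -
    have xc: "x \<in> {al..be}" using x by auto
    have atx: "at x within {al..be} = at x" by (rule at_within_interior) (use x in simp)
    have d1: "deriv (\<lambda>y. \<gamma> (\<Theta> y t) * utx y t) x = G1 x * q x * utx x t + utxx x t * G x"
      apply (rule DERIV_imp_deriv)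
      using DERIV_mult[OF dG[OF xc] dutx[OF xc tI]] atx by (simp add: G_def)
    have d2: "deriv (\<lambda>y. \<gamma> (\<Theta> y t) * ux y t) x = G1 x * q x * ux x t + uxx x t * G x"
      apply (rule DERIV_imp_deriv)
      using DERIV_mult[OF dG[OF xc] dux[OF xc tI]] atx by (simp add: G_def)
    have uttE: "utt x t = G1 x * q x * w x + G x * p x"
      using eq_u[OF x tI] d1 d2 by (simp add: w_def p_def algebra_simps)
    have ThtE: "\<Theta>t x t = D * r x + G x * (utx x t)\<^sup>2"
      using eq_Theta[OF x tI] by (simp add: r_def G_def)
    have FdE: "Fd t x = 2 * w x * vxt x t / (G x + D) - w x^2 * (G1 x * (D * r x + G x * (utx x t)\<^sup>2)) / (G x + D)^2"
      unfolding Fd_def ThtE[symmetric] by (simp add: w_def G_def G1_def)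
    have h1E: "h1 x = (vxt x t - a * utx x t) * (2 * w x / (G x + D))
       + (G1 x * q x * w x + G x * p x) * (2 * p x / (G x + D) - 2 * w x * (G1 x * q x) / (G x + D)^2)"
      unfolding h1_def uttE by simp
    have "\<Phi> x = 2 * a * utx x t * w x / (G x + D) - 2 * G x * (p x)^2 / (G x + D)
        + (q x)^2 * (w x)^2 * (2 * G x * (G1 x)^2 + D * (G x + D) * G2 x) / (G x + D)^3
        - (w x)^2 * G1 x * G x * (utx x t)^2 / (G x + D)^2"
      unfolding \<Phi>_def FdE h1E h2_def
      by (rule key_identity) (use Gpos[OF xc] in simp)
    also have "\<dots> \<le> R x"
    proof -
      have ue: "utx x t = w x - a * ux x t" by (simp add: w_def)
      have Th0: "0 \<le> \<Theta> x t" using Th_nn[OF xc tI] .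
      show ?thesis unfolding ue R_def
        by (rule key_ineq) (use g1_pos g_mono[OF Th0] D_pos a_pos eta g1_mono[OF Th0] g2[OF Th0] in \<open>auto simp: G_def G1_def G2_def\<close>)
    qed
    finally show ?thesis .
  qed
  define \<Phi>' where "\<Phi>' = (\<lambda>x. if x \<in> {al, be} then R x else \<Phi> x)"
  have hPhi': "(\<Phi>' has_integral (integral {al..be} (Fd t) - 0 + D * 0)) {al..be}"
    by (rule has_integral_spike_finite[OF _ _ hPhi, of "{al, be}"]) (auto simp: \<Phi>'_def)
  have le: "integral {al..be} (Fd t) \<le> (2 + \<eta>) * a * integral {al..be} (\<lambda>x. w x^2 / (G x + D))
      + a ^ 3 / (\<eta> * D) * integral {al..be} (\<lambda>x. (ux x t)\<^sup>2)
      - 2 * \<gamma> 0 / (\<gamma> 0 + D) * integral {al..be} (\<lambda>x. (p x)\<^sup>2)"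
    using has_integral_le[OF hPhi' hR] pw unfolding \<Phi>'_def by (auto simp: \<Phi>'_def)
  have deq: "deriv (\<lambda>s. integral {al..be} (\<lambda>x. (utx x s + a * ux x s)\<^sup>2 / (\<gamma> (\<Theta> x s) + D))) t
      = integral {al..be} (Fd t)"
    by (rule DERIV_imp_deriv[OF LB2])
  have dif: "(\<lambda>s. integral {al..be} (\<lambda>x. (utx x s + a * ux x s)\<^sup>2 / (\<gamma> (\<Theta> x s) + D))) differentiable (at t)"
    by (rule differentiableI[OF has_field_derivative_imp_has_derivative[OF LB2]])
  have e1: "(\<lambda>x. w x^2 / (G x + D)) = (\<lambda>x. (utx x t + a * ux x t)\<^sup>2 / (\<gamma> (\<Theta> x t) + D))"
    by (simp add: w_def G_def)
  have e3: "(\<lambda>x. (p x)\<^sup>2) = (\<lambda>x. (utxx x t + a * uxx x t)\<^sup>2)"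
    by (simp add: p_def)
  show "(\<lambda>s. integral {al..be} (\<lambda>x. (utx x s + a * ux x s)\<^sup>2 / (\<gamma> (\<Theta> x s) + D))) differentiable (at t) \<and>
     deriv (\<lambda>s. integral {al..be} (\<lambda>x. (utx x s + a * ux x s)\<^sup>2 / (\<gamma> (\<Theta> x s) + D))) t
       + 2 * \<gamma> 0 / (\<gamma> 0 + D) * integral {al..be} (\<lambda>x. (utxx x t + a * uxx x t)\<^sup>2)
     \<le> (2 + \<eta>) * a * integral {al..be} (\<lambda>x. (utx x t + a * ux x t)\<^sup>2 / (\<gamma> (\<Theta> x t) + D))
       + a ^ 3 / (\<eta> * D) * integral {al..be} (\<lambda>x. (ux x t)\<^sup>2)"
    using dif deq le unfolding e1 e3 by linarith
qed

end
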